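(* Let $f$ be a DNF with $k$ terms over $\{0,1\}^n$ and let $y\in\{0,1\}^n$ satisfy $f_{>\tau}$ and not $f_{\le\tau}$ ($\tau=1000k$). Draw a uniformly random permutation $\pi$ of $[n]$ and run the sweep process from $y$, obtaining $z_0,z_1,\dots,z_n$. Then with probability at least $2^{-\tilde{O}(\sqrt{k})}$ there is some $i$ such that $\textsc{GenerateCandidateStem}(f,z_i)$ is a valid stem for some term of $f$ satisfied by $y$.
   Context: Terms are sets of literals, a DNF is a set of terms; $|T|$ is the number of literals; $g_{\le L}$ / $g_{>L}$ are the sub-DNFs of terms of length $\le L$ / $>L$. A term $T'$ is a valid stem of a term $T$ if $T'\subseteq T$ and $|T\setminus T'|\le 2k$. $x^{\oplus j}$ is $x$ with bit $j$ flipped. $\textsc{GenerateCandidateStem}(f,x)$: let $I=\{i: f(x^{\oplus i})=0\}$ and output the term $\{x_i:i\in I,x_i=1\}\cup\{\overline{x_i}:i\in I,x_i=0\}$. Sweep process: given $y$ with $f(y)=1$ and a permutation $\pi$ listing $[n]$ as $\pi(0),\dots,\pi(n-1)$, $z_0=y$, and $z_{t+1}=z_t^{\oplus\pi(t)}$ if $f(z_t^{\oplus\pi(t)})=1$, else $z_{t+1}=z_t$. (This is one iteration of the outer loop of the procedure FindCandidateStem.) *)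

theory Defs
  imports "HOL-Probability.Probability_Mass_Function" "HOL-Combinatorics.Multiset_Permutations"
begin

(* A literal (i, b) over variables x_0..x_{n-1}: (i, True) is x_i, (i, False) is the negation of x_i. *)
type_synonym literal = "nat \<times> bool"
type_synonym dnf_term = "literal set"
type_synonym dnf = "dnf_term set"

(* points of {0,1}^n are boolean lists of length n *)
definition sat_term :: "dnf_term \<Rightarrow> bool list \<Rightarrow> bool" where
  "sat_term T x \<longleftrightarrow> (\<forall>(i, b) \<in> T. x ! i = b)"

definition eval_dnf :: "dnf \<Rightarrow> bool list \<Rightarrow> bool" where
  "eval_dnf f x \<longleftrightarrow> (\<exists>T \<in> f. sat_term T x)"

definition dnf_over :: "nat \<Rightarrow> dnf \<Rightarrow> bool" where
  "dnf_over n f \<longleftrightarrow> (\<forall>T \<in> f. \<forall>(i, b) \<in> T. i < n)"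

definition dnf_le :: "nat \<Rightarrow> dnf \<Rightarrow> dnf" where
  "dnf_le L f = {T \<in> f. card T \<le> L}"

definition dnf_gt :: "nat \<Rightarrow> dnf \<Rightarrow> dnf" where
  "dnf_gt L f = {T \<in> f. card T > L}"

definition flip_bit :: "bool list \<Rightarrow> nat \<Rightarrow> bool list" where
  "flip_bit x j = x[j := \<not> x ! j]"

definition valid_stem :: "nat \<Rightarrow> dnf_term \<Rightarrow> dnf_term \<Rightarrow> bool" where
  "valid_stem k T' T \<longleftrightarrow> T' \<subseteq> T \<and> card (T - T') \<le> 2 * k"

definition generate_candidate_stem :: "dnf \<Rightarrow> bool list \<Rightarrow> dnf_term" where
  "generate_candidate_stem f x =
     {(i, x ! i) | i. i < length x \<and> \<not> eval_dnf f (flip_bit x i)}"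

(* sweep process: sweep f y \<pi> t = z_t; \<pi> is a list enumerating [n] as \<pi>(0),...,\<pi>(n-1) *)
fun sweep :: "dnf \<Rightarrow> bool list \<Rightarrow> nat list \<Rightarrow> nat \<Rightarrow> bool list" where
  "sweep f y \<pi> 0 = y"
| "sweep f y \<pi> (Suc t) =
     (let z = sweep f y \<pi> t; z' = flip_bit z (\<pi> ! t)
      in if eval_dnf f z' then z' else z)"

end

theory Submission
  imports Defs
begin

definition vars :: "dnf_term \<Rightarrow> nat set" where "vars T = fst ` T"
definition alive :: "dnf \<Rightarrow> bool list \<Rightarrow> bool list \<Rightarrow> dnf" where
  "alive f y z = {T \<in> f. sat_term T y \<and> sat_term T z}"
definition Dis :: "dnf \<Rightarrow> nat set" where
  "Dis A = (\<Union>T\<in>A. vars T) - (\<Inter>T\<in>A. vars T)"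
definition rep :: "bool list \<Rightarrow> dnf_term \<Rightarrow> nat" where
  "rep y T = (SOME i. \<exists>b. (i, b) \<in> T \<and> y ! i \<noteq> b)"
definition Qs :: "dnf \<Rightarrow> bool list \<Rightarrow> nat set" where
  "Qs f y = rep y ` {T \<in> f. \<not> sat_term T y}"
definition stepf :: "dnf \<Rightarrow> bool list \<Rightarrow> nat \<Rightarrow> bool list" where
  "stepf f z c = (let z' = flip_bit z c in if eval_dnf f z' then z' else z)"
fun sweepl :: "dnf \<Rightarrow> bool list \<Rightarrow> nat list \<Rightarrow> bool list" where
  "sweepl f z [] = z"
| "sweepl f z (c # cs) = sweepl f (stepf f z c) cs"
definition good :: "dnf \<Rightarrow> nat \<Rightarrow> bool list \<Rightarrow> bool list \<Rightarrow> bool" where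
  "good f k y z = (\<exists>T \<in> f. sat_term T y \<and> valid_stem k (generate_candidate_stem f z) T)"
definition Ev :: "dnf \<Rightarrow> nat \<Rightarrow> bool list \<Rightarrow> bool list \<Rightarrow> nat list \<Rightarrow> bool" where
  "Ev f k y z \<pi> = (\<exists>i \<le> length \<pi>. good f k y (sweepl f z (take i \<pi>)))"
definition eA :: "dnf \<Rightarrow> dnf_term \<Rightarrow> nat" where
  "eA A T = card {i \<in> vars T. \<exists>T' \<in> A. i \<notin> vars T'}"

lemma sweepl_append: "sweepl f z (xs @ ys) = sweepl f (sweepl f z xs) ys"
  by (induction xs arbitrary: z) auto

lemma sweep_eq: "i \<le> length \<pi> \<Longrightarrow> sweep f y \<pi> i = sweepl f y (take i \<pi>)"
proof (induction i)
  case 0 then show ?case by simp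
next
  case (Suc i)
  then have "take (Suc i) \<pi> = take i \<pi> @ [\<pi> ! i]" by (simp add: take_Suc_conv_app_nth)
  then show ?case using Suc by (simp add: sweepl_append stepf_def Let_def)
qed

lemma Ev_Cons: "good f k y z \<or> Ev f k y (stepf f z x) \<pi> \<Longrightarrow> Ev f k y z (x # \<pi>)"
  unfolding Ev_def
proof (elim disjE exE conjE)
  assume "good f k y z" then show "\<exists>i\<le>length (x # \<pi>). good f k y (sweepl f z (take i (x # \<pi>)))"
    by (intro exI[of _ 0]) auto
next
  fix i assume "i \<le> length \<pi>" "good f k y (sweepl f (stepf f z x) (take i \<pi>))"
  then show "\<exists>i\<le>length (x # \<pi>). good f k y (sweepl f z (take i (x # \<pi>)))"
    by (intro exI[of _ "Suc i"]) auto
qed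

lemma flip_len[simp]: "length (flip_bit z x) = length z" by (simp add: flip_bit_def)
lemma flip_other: "i \<noteq> x \<Longrightarrow> flip_bit z x ! i = z ! i" by (simp add: flip_bit_def)
lemma flip_same: "x < length z \<Longrightarrow> flip_bit z x ! x = (\<not> z ! x)" by (simp add: flip_bit_def)

lemma rep_prop: "\<not> sat_term T y \<Longrightarrow> \<exists>b. (rep y T, b) \<in> T \<and> y ! rep y T \<noteq> b"
proof -
  assume "\<not> sat_term T y"
  then have "\<exists>i b. (i, b) \<in> T \<and> y ! i \<noteq> b" unfolding sat_term_def by auto
  then show ?thesis unfolding rep_def by (rule someI_ex)
qed

context
  fixes n k :: nat and f :: dnf and y :: "bool list"
  assumes over: "dnf_over n f" and cardf: "card f = k" and leny: "length y = n"
begin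

lemma term_lt: "T \<in> f \<Longrightarrow> (i, b) \<in> T \<Longrightarrow> i < n"
  using over unfolding dnf_over_def by fast

lemma fin_f: "finite f"
proof -
  have "f \<subseteq> Pow ({0..<n} \<times> UNIV)" using term_lt by fastforce
  then show ?thesis by (rule finite_subset) auto
qed

lemma fin_T: "T \<in> f \<Longrightarrow> finite T"
proof -
  assume "T \<in> f"
  then have "T \<subseteq> {0..<n} \<times> UNIV" using term_lt by fastforce
  then show ?thesis by (rule finite_subset) auto
qed

definition sinv :: "nat set \<Rightarrow> bool list \<Rightarrow> bool" where
  "sinv R z \<longleftrightarrow> finite R \<and> R \<subseteq> {0..<n} \<and> length z = n \<and> (\<forall>x\<in>R. z ! x = y ! x)
     \<and> alive f y z \<noteq> {} \<and> Qs f y \<subseteq> R \<and> Dis (alive f y z) \<subseteq> R"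

lemma nony_unsat:
  assumes "sinv R z" "T \<in> f" "\<not> sat_term T y"
  shows "\<not> sat_term T z"
proof -
  obtain b where b: "(rep y T, b) \<in> T" "y ! rep y T \<noteq> b" using rep_prop assms(3) by blast
  have "rep y T \<in> R" using assms unfolding sinv_def Qs_def by auto
  then have "z ! rep y T = y ! rep y T" using assms(1) unfolding sinv_def by auto
  then show ?thesis using b unfolding sat_term_def by auto
qed

lemma sat_flip_char:
  assumes "sinv R z" "x \<in> R" "x \<notin> Qs f y" "T \<in> f"
  shows "sat_term T (flip_bit z x) \<longleftrightarrow> T \<in> alive f y z \<and> x \<notin> vars T"
proof
  assume s: "sat_term T (flip_bit z x)"
  have xn: "x < length z" using assms unfolding sinv_def by auto
  have sy: "sat_term T y"
  proof (rule ccontr)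
    assume ns: "\<not> sat_term T y"
    obtain b where b: "(rep y T, b) \<in> T" "y ! rep y T \<noteq> b" using rep_prop ns by blast
    have r: "rep y T \<in> Qs f y" using assms ns unfolding Qs_def by auto
    then have "rep y T \<in> R" "rep y T \<noteq> x" using assms unfolding sinv_def by auto
    then have "flip_bit z x ! rep y T = y ! rep y T" using assms(1) flip_other unfolding sinv_def by auto
    then show False using s b unfolding sat_term_def by auto
  qed
  have xv: "x \<notin> vars T"
  proof
    assume "x \<in> vars T"
    then obtain b where b: "(x, b) \<in> T" unfolding vars_def by auto
    then have "y ! x = b" using sy unfolding sat_term_def by auto
    moreover have "flip_bit z x ! x = b" using s b unfolding sat_term_def by auto
    moreover have "z ! x = y ! x" using assms unfolding sinv_def by auto
    ultimately show False using flip_same[OF xn] by simp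
  qed
  have "sat_term T z"
    unfolding sat_term_def
  proof (intro ballI, clarify)
    fix i b assume ib: "(i, b) \<in> T"
    then have "i \<noteq> x" using xv unfolding vars_def by force
    then show "z ! i = b" using s ib flip_other[of i x z] unfolding sat_term_def by auto
  qed
  then show "T \<in> alive f y z \<and> x \<notin> vars T" using sy xv assms(4) unfolding alive_def by auto
next
  assume a: "T \<in> alive f y z \<and> x \<notin> vars T"
  show "sat_term T (flip_bit z x)"
    unfolding sat_term_def
  proof (intro ballI, clarify)
    fix i b assume ib: "(i, b) \<in> T"
    then have "i \<noteq> x" using a unfolding vars_def by force
    then show "flip_bit z x ! i = b" using a ib flip_other[of i x z] unfolding sat_term_def alive_def by auto
  qed
qed

lemma step_alive:
  assumes "sinv R z" "x \<in> R" "x \<notin> Qs f y"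
  shows "alive f y (stepf f z x) =
    (if {T \<in> alive f y z. x \<notin> vars T} = {} then alive f y z else {T \<in> alive f y z. x \<notin> vars T})"
proof -
  have ev: "eval_dnf f (flip_bit z x) \<longleftrightarrow> {T \<in> alive f y z. x \<notin> vars T} \<noteq> {}"
    using sat_flip_char[OF assms] unfolding eval_dnf_def alive_def by auto
  show ?thesis
  proof (cases "{T \<in> alive f y z. x \<notin> vars T} = {}")
    case True then show ?thesis using ev by (simp add: stepf_def)
  next
    case False
    then have "stepf f z x = flip_bit z x" using ev by (simp add: stepf_def)
    moreover have "alive f y (flip_bit z x) = {T \<in> alive f y z. x \<notin> vars T}"
      using sat_flip_char[OF assms] unfolding alive_def by auto
    ultimately show ?thesis using False by auto
  qed
qed

lemma Dis_mono: "A' \<subseteq> A \<Longrightarrow> A' \<noteq> {} \<Longrightarrow> Dis A' \<subseteq> Dis A"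
  unfolding Dis_def by blast

lemma step_sinv:
  assumes "sinv R z" "x \<in> R" "x \<notin> Qs f y"
  shows "sinv (R - {x}) (stepf f z x)"
proof -
  let ?A = "alive f y z" let ?Ax = "{T \<in> alive f y z. x \<notin> vars T}"
  have len: "length (stepf f z x) = n" using assms unfolding sinv_def stepf_def Let_def by auto
  have agree: "\<forall>i\<in>R - {x}. stepf f z x ! i = y ! i"
    using assms flip_other unfolding sinv_def stepf_def Let_def by auto
  have al: "alive f y (stepf f z x) \<noteq> {}" "alive f y (stepf f z x) \<subseteq> ?A"
    using step_alive[OF assms] assms(1) unfolding sinv_def by auto
  have "Dis (alive f y (stepf f z x)) \<subseteq> R"
    using Dis_mono[OF al(2) al(1)] assms(1) unfolding sinv_def by auto
  moreover have "x \<notin> Dis (alive f y (stepf f z x))"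
  proof (cases "?Ax = {}")
    case True
    then have "x \<in> (\<Inter>T\<in>?A. vars T)" by auto
    then show ?thesis using True step_alive[OF assms] unfolding Dis_def by auto
  next
    case False
    then show ?thesis using step_alive[OF assms] unfolding Dis_def by auto
  qed
  ultimately show ?thesis using assms len agree al unfolding sinv_def by auto
qed

lemma flip_sat_sub:
  assumes "\<not> sat_term T z"
  shows "\<exists>c. {i. sat_term T (flip_bit z i)} \<subseteq> {c}"
proof -
  obtain c b where cb: "(c, b) \<in> T" "z ! c \<noteq> b" using assms unfolding sat_term_def by auto
  have "{i. sat_term T (flip_bit z i)} \<subseteq> {c}"
  proof
    fix i assume "i \<in> {i. sat_term T (flip_bit z i)}"
    then have "flip_bit z i ! c = b" using cb unfolding sat_term_def by auto
    then have "c = i" using cb flip_other by metis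
    then show "i \<in> {c}" by simp
  qed
  then show ?thesis by blast
qed

lemma flip_sat_unique:
  assumes "\<not> sat_term T z"
  shows "card {i. sat_term T (flip_bit z i)} \<le> 1" "finite {i. sat_term T (flip_bit z i)}"
proof -
  obtain c where c: "{i. sat_term T (flip_bit z i)} \<subseteq> {c}" using flip_sat_sub[OF assms] by blast
  show "finite {i. sat_term T (flip_bit z i)}" using finite_subset[OF c] by simp
  show "card {i. sat_term T (flip_bit z i)} \<le> 1" using card_mono[OF _ c] by simp
qed

lemma good_lemma:
  assumes "sinv R z" "T \<in> alive f y z" "eA (alive f y z) T \<le> k"
  shows "good f k y z"
proof -
  let ?A = "alive f y z"
  have Tf: "T \<in> f" and sy: "sat_term T y" and sz: "sat_term T z" using assms(2) unfolding alive_def by auto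
  have lz: "length z = n" using assms unfolding sinv_def by auto
  let ?G = "generate_candidate_stem f z"
  have sub: "?G \<subseteq> T"
  proof
    fix l assume "l \<in> ?G"
    then obtain i where l: "l = (i, z ! i)" "i < length z" "\<not> eval_dnf f (flip_bit z i)"
      unfolding generate_candidate_stem_def by auto
    have "i \<in> vars T"
    proof (rule ccontr)
      assume "i \<notin> vars T"
      then have "sat_term T (flip_bit z i)" using sz flip_other[of _ i z]
        unfolding sat_term_def vars_def by force
      then show False using l Tf unfolding eval_dnf_def by auto
    qed
    then obtain b where "(i, b) \<in> T" unfolding vars_def by auto
    then show "l \<in> T" using sz l unfolding sat_term_def by auto
  qed
  define U where "U = {T' \<in> f. \<not> sat_term T' z}"
  define E1 where "E1 = {i \<in> vars T. \<exists>T' \<in> ?A. i \<notin> vars T'}"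
  define N where "N = (\<Union>T'\<in>U. {i. sat_term T' (flip_bit z i)})"
  have finT: "finite T" using fin_T Tf by auto
  have finU: "finite U" using fin_f unfolding U_def by auto
  have "T - ?G \<subseteq> {(i, b) \<in> T. eval_dnf f (flip_bit z i)}"
  proof
    fix l assume l: "l \<in> T - ?G"
    obtain i b where ib: "l = (i, b)" by fastforce
    have "i < n" using term_lt Tf l ib by auto
    moreover have "b = z ! i" using sz l ib unfolding sat_term_def by auto
    ultimately show "l \<in> {(i, b) \<in> T. eval_dnf f (flip_bit z i)}"
      using l ib lz unfolding generate_candidate_stem_def by auto
  qed
  then have "card (T - ?G) \<le> card (fst ` {(i, b) \<in> T. eval_dnf f (flip_bit z i)})"
  proof -
    have inj: "inj_on fst T"
    proof (rule inj_onI)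
      fix p q assume pq: "p \<in> T" "q \<in> T" "fst p = fst q"
      obtain a b where p: "p = (a, b)" by fastforce
      obtain c d where q: "q = (c, d)" by fastforce
      have "b = z ! a" "d = z ! c" using sz pq p q unfolding sat_term_def by auto
      then show "p = q" using p q pq by auto
    qed
    have "card (T - ?G) \<le> card {(i, b) \<in> T. eval_dnf f (flip_bit z i)}"
      by (rule card_mono[OF finite_subset[OF _ finT]]) (use \<open>T - ?G \<subseteq> _\<close> in auto)
    also have "\<dots> = card (fst ` {(i, b) \<in> T. eval_dnf f (flip_bit z i)})"
      by (rule card_image[symmetric]) (rule inj_on_subset[OF inj], auto)
    finally show ?thesis .
  qed
  also have "fst ` {(i, b) \<in> T. eval_dnf f (flip_bit z i)} \<subseteq> E1 \<union> N"
  proof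
    fix i assume "i \<in> fst ` {(i, b) \<in> T. eval_dnf f (flip_bit z i)}"
    then obtain b where ib: "(i, b) \<in> T" "eval_dnf f (flip_bit z i)" by force
    have iv: "i \<in> vars T" using ib unfolding vars_def by force
    have ilt: "i < length z" using term_lt Tf ib lz by auto
    obtain T' where T': "T' \<in> f" "sat_term T' (flip_bit z i)" using ib unfolding eval_dnf_def by auto
    show "i \<in> E1 \<union> N"
    proof (cases "sat_term T' z")
      case True
      have "sat_term T' y" using nony_unsat[OF assms(1) T'(1)] True by blast
      then have inA: "T' \<in> ?A" using True T' unfolding alive_def by auto
      have "i \<notin> vars T'"
      proof
        assume "i \<in> vars T'"
        then obtain c where "(i, c) \<in> T'" unfolding vars_def by auto
        then show False using True T'(2) flip_same[OF ilt] unfolding sat_term_def by fastforce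
      qed
      then show ?thesis using iv inA unfolding E1_def by auto
    next
      case False
      then show ?thesis using T' unfolding N_def U_def by auto
    qed
  qed
  then have "card (fst ` {(i, b) \<in> T. eval_dnf f (flip_bit z i)}) \<le> card (E1 \<union> N)"
  proof (rule card_mono[rotated])
    have "finite E1" unfolding E1_def vars_def using finT by auto
    moreover have "finite N" unfolding N_def
    proof (rule finite_UN_I[OF finU])
      fix T' assume "T' \<in> U"
      then show "finite {i. sat_term T' (flip_bit z i)}" using flip_sat_unique(2) unfolding U_def by auto
    qed
    ultimately show "finite (E1 \<union> N)" by auto
  qed
  also have "card (E1 \<union> N) \<le> card E1 + card N" by (rule card_Un_le)
  also have "card N \<le> (\<Sum>T'\<in>U. card {i. sat_term T' (flip_bit z i)})"
    unfolding N_def by (rule card_UN_le[OF finU])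
  also have "\<dots> \<le> (\<Sum>T'\<in>U. 1)"
    by (rule sum_mono) (use flip_sat_unique in \<open>auto simp: U_def\<close>)
  also have "\<dots> = card U" by simp
  also have "card U \<le> k" using card_mono[OF fin_f, of U] cardf unfolding U_def by auto
  finally have "card (T - ?G) \<le> card E1 + k" by simp
  moreover have "card E1 \<le> k" using assms(3) unfolding eA_def E1_def by simp
  ultimately have "card (T - ?G) \<le> 2 * k" by simp
  then show ?thesis using sub Tf sy unfolding good_def valid_stem_def by auto
qed

lemma fin_alive: "finite (alive f y z)"
  using fin_f unfolding alive_def by auto

lemma fail_eA:
  assumes "sinv R z" "\<not> good f k y z" "T \<in> alive f y z"
  shows "k + 1 \<le> eA (alive f y z) T"
  using good_lemma[OF assms(1) assms(3)] assms(2) by linarith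

lemma eA_le:
  assumes "T \<in> f" "T \<in> A"
  shows "eA A T \<le> card (vars T \<inter> Dis A)"
  unfolding eA_def
proof (rule card_mono)
  show "finite (vars T \<inter> Dis A)" using fin_T[OF assms(1)] unfolding vars_def by auto
next
  show "{i \<in> vars T. \<exists>T'\<in>A. i \<notin> vars T'} \<subseteq> vars T \<inter> Dis A"
    using assms(2) unfolding Dis_def by auto
qed

lemma double_count:
  assumes "finite A" "finite D"
  shows "(\<Sum>x\<in>D. card {T \<in> A. x \<in> vars T}) = (\<Sum>T\<in>A. card (vars T \<inter> D))"
proof -
  have "(\<Sum>x\<in>D. card {T \<in> A. x \<in> vars T}) = (\<Sum>x\<in>D. \<Sum>T\<in>A. if x \<in> vars T then 1 else 0)"
    using assms by (simp add: sum.inter_filter[symmetric])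
  also have "\<dots> = (\<Sum>T\<in>A. \<Sum>x\<in>D. if x \<in> vars T then 1 else 0)" by (rule sum.swap)
  also have "\<dots> = (\<Sum>T\<in>A. card {x \<in> D. x \<in> vars T})"
    using assms by (simp add: sum.inter_filter[symmetric])
  also have "\<dots> = (\<Sum>T\<in>A. card (vars T \<inter> D))"
    by (rule sum.cong) (auto intro: arg_cong[where f = card])
  finally show ?thesis .
qed

lemma q_bound: "card (Qs f y) + card (alive f y z) \<le> k"
proof -
  let ?N = "{T \<in> f. \<not> sat_term T y}" let ?S = "{T \<in> f. sat_term T y}"
  have "card (Qs f y) \<le> card ?N" unfolding Qs_def by (rule card_image_le) (use fin_f in auto)
  moreover have "card (alive f y z) \<le> card ?S"
    by (rule card_mono) (use fin_f in \<open>auto simp: alive_def\<close>)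
  moreover have "card ?N + card ?S = k"
  proof -
    have "?N \<union> ?S = f" by auto
    moreover have "?N \<inter> ?S = {}" by auto
    ultimately show ?thesis using card_Un_disjoint[of ?N ?S] fin_f cardf by auto
  qed
  ultimately show ?thesis by linarith
qed

lemma arith_core:
  fixes a q K kk \<beta> :: nat
  assumes "a * (kk + 1) \<le> K + q * (a - 1)" "q + a \<le> kk" "kk \<le> \<beta> * \<beta>" "1 \<le> a"
  shows "a * q \<le> \<beta> * K"
proof -
  have "a * (q + a) \<le> a * kk" using assms(2) by (rule mult_le_mono2)
  then have "a * (kk + 1) \<ge> a * (q + a) + a" by (simp add: algebra_simps)
  have qa: "q * (a - 1) + q = q * a" using assms(4) by (cases a) (auto simp: algebra_simps)
  have "a * (q + a) + a \<le> K + q * (a - 1)" using assms(1) \<open>a * (kk + 1) \<ge> _\<close> by linarith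
  then have "a * a + q \<le> K" using qa by (simp add: algebra_simps)
  then have "\<beta> * (a * a) + \<beta> * q \<le> \<beta> * K" by (metis add_mult_distrib2 mult_le_mono2)
  moreover have "a * q \<le> \<beta> * (a * a) + \<beta> * q"
  proof (cases "a \<le> \<beta>")
    case True
    then have "a * q \<le> \<beta> * q" by simp
    then show ?thesis by linarith
  next
    case False
    then have "\<beta> * \<beta> * a \<le> \<beta> * (a * a)" by (simp add: mult.assoc mult_le_mono)
    moreover have "a * q \<le> \<beta> * \<beta> * a" using assms(2,3)
      by (metis le_add1 le_trans mult.commute mult_le_mono2)
    ultimately show ?thesis by linarith
  qed
  ultimately show ?thesis by linarith
qed

lemma bern:
  fixes a b :: nat and \<beta> :: nat
  assumes "1 \<le> b" "b \<le> a"
  shows "(1 / real a) ^ \<beta> * (1 + real \<beta> * real (a - b) / real a) \<le> (1 / real b) ^ \<beta>"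
proof -
  have ab: "real (a - b) = real a - real b" using assms by simp
  have pos: "real b > 0" "real a > 0" using assms by auto
  have "1 + real \<beta> * real (a - b) / real a \<le> 1 + real \<beta> * ((real a - real b) / real b)"
    using pos assms ab by (intro add_left_mono mult_left_mono) (auto simp: frac_le)
  also have "\<dots> \<le> (1 + (real a - real b) / real b) ^ \<beta>"
    by (rule Bernoulli_inequality) (use pos assms in \<open>auto simp: field_simps\<close>)
  also have "1 + (real a - real b) / real b = real a / real b" using pos by (simp add: field_simps)
  finally have "1 + real \<beta> * real (a - b) / real a \<le> (real a / real b) ^ \<beta>" .
  then have "(1 / real a) ^ \<beta> * (1 + real \<beta> * real (a - b) / real a) \<le> (1 / real a) ^ \<beta> * (real a / real b) ^ \<beta>"
    by (rule mult_left_mono) simp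
  also have "\<dots> = (1 / real b) ^ \<beta>" using pos by (simp add: power_mult_distrib[symmetric])
  finally show ?thesis .
qed

lemma core:
  assumes inv: "sinv R z" and ng: "\<not> good f k y z" and beta: "k \<le> \<beta> * \<beta>"
  shows "real (card R) * (1 / real (card (alive f y z))) ^ \<beta>
     \<le> (\<Sum>x\<in>R - Qs f y. (1 / real (card (alive f y (stepf f z x)))) ^ \<beta>)"
proof -
  define A where "A = alive f y z"
  define a where "a = card A"
  define D where "D = Dis A"
  define Q where "Q = Qs f y"
  define kil where "kil x = card {T \<in> A. x \<in> vars T}" for x
  define g where "g m = (1 / real m) ^ \<beta>" for m :: nat
  define K where "K = (\<Sum>x\<in>D - Q. kil x)"
  have finA: "finite A" unfolding A_def by (rule fin_alive)
  have Ane: "A \<noteq> {}" using inv unfolding sinv_def A_def by auto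
  have a1: "1 \<le> a" unfolding a_def using finA Ane by (simp add: Suc_leI card_gt_0_iff)
  have finR: "finite R" and DR: "D \<subseteq> R" and QR: "Q \<subseteq> R"
    using inv unfolding sinv_def D_def A_def Q_def by auto
  have finD: "finite D" "finite Q" using finR DR QR finite_subset by auto
  have Af: "A \<subseteq> f" unfolding A_def alive_def by auto
  have part: "card {T \<in> A. x \<notin> vars T} + kil x = a" for x
  proof -
    have "{T \<in> A. x \<notin> vars T} \<union> {T \<in> A. x \<in> vars T} = A" by auto
    moreover have "{T \<in> A. x \<notin> vars T} \<inter> {T \<in> A. x \<in> vars T} = {}" by auto
    ultimately show ?thesis unfolding kil_def a_def using finA card_Un_disjoint
      by (metis (no_types, lifting) finite_Un)
  qed
  have stepD: "alive f y (stepf f z x) = {T \<in> A. x \<notin> vars T} \<and> {T \<in> A. x \<notin> vars T} \<noteq> {}"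
    if "x \<in> D - Q" for x
  proof -
    have "x \<in> R" "x \<notin> Qs f y" using that DR unfolding Q_def by auto
    moreover have "{T \<in> A. x \<notin> vars T} \<noteq> {}" using that unfolding D_def Dis_def by auto
    ultimately show ?thesis using step_alive[OF inv] unfolding A_def by auto
  qed
  have stepO: "alive f y (stepf f z x) = A" if "x \<in> R - Q - D" for x
  proof -
    have xR: "x \<in> R" "x \<notin> Qs f y" using that unfolding Q_def by auto
    show ?thesis
    proof (cases "{T \<in> A. x \<notin> vars T} = {}")
      case True then show ?thesis using step_alive[OF inv xR] unfolding A_def by auto
    next
      case False
      then have "{T \<in> A. x \<notin> vars T} = A" using that unfolding D_def Dis_def by auto
      then show ?thesis using False step_alive[OF inv xR] unfolding A_def by auto
    qed
  qed
  have kil_le: "kil x \<le> a - 1" if "x \<in> D" for x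
  proof -
    have "{T \<in> A. x \<notin> vars T} \<noteq> {}" using that unfolding D_def Dis_def by auto
    then have "card {T \<in> A. x \<notin> vars T} \<ge> 1" using finA by (simp add: Suc_leI card_gt_0_iff)
    then show ?thesis using part[of x] by linarith
  qed
  have sumD: "a * (k + 1) \<le> (\<Sum>x\<in>D. kil x)"
  proof -
    have "a * (k + 1) = (\<Sum>T\<in>A. k + 1)" unfolding a_def by simp
    also have "\<dots> \<le> (\<Sum>T\<in>A. eA A T)"
      by (rule sum_mono) (use fail_eA[OF inv ng] in \<open>auto simp: A_def\<close>)
    also have "\<dots> \<le> (\<Sum>T\<in>A. card (vars T \<inter> D))"
      by (rule sum_mono) (use eA_le Af in \<open>auto simp: D_def\<close>)
    also have "\<dots> = (\<Sum>x\<in>D. kil x)" unfolding kil_def using double_count[OF finA finD(1)] by simp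
    finally show ?thesis .
  qed
  have "(\<Sum>x\<in>D. kil x) = K + (\<Sum>x\<in>D \<inter> Q. kil x)"
    unfolding K_def using sum.Int_Diff[OF finD(1), of kil Q] by simp
  moreover have "(\<Sum>x\<in>D \<inter> Q. kil x) \<le> card Q * (a - 1)"
  proof -
    have "(\<Sum>x\<in>D \<inter> Q. kil x) \<le> (\<Sum>x\<in>D \<inter> Q. a - 1)" by (rule sum_mono) (use kil_le in auto)
    also have "\<dots> = card (D \<inter> Q) * (a - 1)" by simp
    also have "\<dots> \<le> card Q * (a - 1)" using finD by (simp add: card_mono)
    finally show ?thesis .
  qed
  ultimately have pre: "a * (k + 1) \<le> K + card Q * (a - 1)" using sumD by linarith
  have qb: "card Q + a \<le> k" using q_bound unfolding Q_def a_def A_def by blast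
  have KK: "a * card Q \<le> \<beta> * K" by (rule arith_core[OF pre qb beta a1])
  have RQ: "R - Q = (D - Q) \<union> (R - Q - D)" using DR by auto
  have sum_split: "(\<Sum>x\<in>R - Q. g (card (alive f y (stepf f z x)))) =
      (\<Sum>x\<in>D - Q. g (card (alive f y (stepf f z x)))) + (\<Sum>x\<in>R - Q - D. g (card (alive f y (stepf f z x))))"
    by (subst RQ, rule sum.union_disjoint) (use finR finD in auto)
  have s2: "(\<Sum>x\<in>R - Q - D. g (card (alive f y (stepf f z x)))) = card (R - Q - D) * g a"
    using stepO unfolding a_def by simp
  have s1: "(\<Sum>x\<in>D - Q. g (card (alive f y (stepf f z x)))) \<ge> (\<Sum>x\<in>D - Q. g a * (1 + real \<beta> * real (kil x) / real a))"
  proof (rule sum_mono)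
    fix x assume x: "x \<in> D - Q"
    have b1: "1 \<le> card {T \<in> A. x \<notin> vars T}" using stepD[OF x] finA by (simp add: Suc_leI card_gt_0_iff)
    have "kil x = a - card {T \<in> A. x \<notin> vars T}" using part[of x] by linarith
    then show "g a * (1 + real \<beta> * real (kil x) / real a) \<le> g (card (alive f y (stepf f z x)))"
      using bern[OF b1, of a \<beta>] part[of x] stepD[OF x] unfolding g_def by auto
  qed
  have s1': "(\<Sum>x\<in>D - Q. g a * (1 + real \<beta> * real (kil x) / real a))
      = g a * (real (card (D - Q)) + real \<beta> * real K / real a)"
  proof -
    have "(\<Sum>x\<in>D - Q. g a * (1 + real \<beta> * real (kil x) / real a))
        = g a * (\<Sum>x\<in>D - Q. 1 + real \<beta> * real (kil x) / real a)"
      by (rule sum_distrib_left[symmetric])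
    moreover have "(\<Sum>x\<in>D - Q. 1 + real \<beta> * real (kil x) / real a)
        = real (card (D - Q)) + real \<beta> * real K / real a"
      unfolding K_def by (simp add: sum.distrib sum_divide_distrib[symmetric] sum_distrib_left[symmetric])
    ultimately show ?thesis by simp
  qed
  have ga: "g a \<ge> 0" unfolding g_def by simp
  have "real (card Q) \<le> real \<beta> * real K / real a"
  proof -
    have "real a * real (card Q) \<le> real \<beta> * real K" using KK by (metis of_nat_le_iff of_nat_mult)
    moreover have "real a > 0" using a1 by simp
    ultimately show ?thesis by (simp add: pos_le_divide_eq mult.commute)
  qed
  then have "g a * (real (card (D - Q)) + real (card Q)) \<le> g a * (real (card (D - Q)) + real \<beta> * real K / real a)"
    using ga by (intro mult_left_mono) auto
  moreover have "card R = card (D - Q) + card Q + card (R - Q - D)"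
  proof -
    have "card (R - Q) = card R - card Q" using QR finR by (simp add: card_Diff_subset finite_subset)
    moreover have "card (R - Q) = card (D - Q) + card (R - Q - D)"
      by (subst RQ, rule card_Un_disjoint) (use finR finD in auto)
    moreover have "card Q \<le> card R" using QR finR by (simp add: card_mono)
    ultimately show ?thesis by linarith
  qed
  ultimately have "real (card R) * g a \<le> (\<Sum>x\<in>R - Q. g (card (alive f y (stepf f z x))))"
    using sum_split s1 s1' s2 by (simp add: algebra_simps)
  then show ?thesis unfolding g_def a_def A_def Q_def .
qed

lemma good_bound:
  assumes inv: "sinv R z" and gd: "good f k y z"
  shows "fact (card R) * (1 / real (card (alive f y z))) ^ \<beta>
     \<le> real (card {\<pi> \<in> permutations_of_set R. Ev f k y z \<pi>})"
proof -
  have "{\<pi> \<in> permutations_of_set R. Ev f k y z \<pi>} = permutations_of_set R"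
    using gd unfolding Ev_def by force
  moreover have "finite R" using inv unfolding sinv_def by auto
  moreover have "(1 / real (card (alive f y z))) ^ \<beta> \<le> 1"
  proof -
    have "alive f y z \<noteq> {}" using inv unfolding sinv_def by auto
    then have "card (alive f y z) \<ge> 1" using fin_alive by (simp add: Suc_leI card_gt_0_iff)
    then show ?thesis by (intro power_le_one) auto
  qed
  ultimately show ?thesis by (simp add: mult_left_le)
qed

lemma ng_nonempty:
  assumes inv: "sinv R z" and ng: "\<not> good f k y z"
  shows "R \<noteq> {}"
proof -
  obtain T where T: "T \<in> alive f y z" using inv unfolding sinv_def by auto
  have "k + 1 \<le> eA (alive f y z) T" by (rule fail_eA[OF inv ng T])
  also have "\<dots> \<le> card (vars T \<inter> Dis (alive f y z))"
    by (rule eA_le) (use T in \<open>auto simp: alive_def\<close>)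
  finally have "Dis (alive f y z) \<noteq> {}" by auto
  then show ?thesis using inv unfolding sinv_def by auto
qed

lemma main:
  assumes beta: "k \<le> \<beta> * \<beta>"
  shows "card R = m \<Longrightarrow> sinv R z \<Longrightarrow> fact m * (1 / real (card (alive f y z))) ^ \<beta>
     \<le> real (card {\<pi> \<in> permutations_of_set R. Ev f k y z \<pi>})"
proof (induction m arbitrary: R z)
  case 0
  show ?case
  proof (cases "good f k y z")
    case True then show ?thesis using good_bound[OF 0(2)] 0(1) by simp
  next
    case False
    then have "R \<noteq> {}" using ng_nonempty[OF 0(2)] by auto
    moreover have "finite R" using 0(2) unfolding sinv_def by auto
    ultimately show ?thesis using 0(1) by simp
  qed
next
  case (Suc m)
  note inv = Suc.prems(2)
  show ?case
  proof (cases "good f k y z")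
    case True then show ?thesis using good_bound[OF inv] Suc.prems(1) by simp
  next
    case False
    have finR: "finite R" using inv unfolding sinv_def by auto
    have Rne: "R \<noteq> {}" using ng_nonempty[OF inv False] .
    define Q where "Q = Qs f y"
    define B where "B x = {\<pi>' \<in> permutations_of_set (R - {x}). Ev f k y (stepf f z x) \<pi>'}" for x
    define g where "g m = (1 / real m) ^ \<beta>" for m :: nat
    have sub: "(\<Union>x\<in>R - Q. (#) x ` B x) \<subseteq> {\<pi> \<in> permutations_of_set R. Ev f k y z \<pi>}"
    proof
      fix \<pi> assume "\<pi> \<in> (\<Union>x\<in>R - Q. (#) x ` B x)"
      then obtain x \<pi>' where x: "x \<in> R" "\<pi> = x # \<pi>'" "\<pi>' \<in> permutations_of_set (R - {x})"
        "Ev f k y (stepf f z x) \<pi>'" unfolding B_def by auto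
      have "\<pi> \<in> permutations_of_set R" using x permutations_of_set_nonempty[OF Rne] by auto
      moreover have "Ev f k y z \<pi>" using x Ev_Cons by auto
      ultimately show "\<pi> \<in> {\<pi> \<in> permutations_of_set R. Ev f k y z \<pi>}" by auto
    qed
    have finB: "finite (B x)" for x unfolding B_def by auto
    have "card (\<Union>x\<in>R - Q. (#) x ` B x) = (\<Sum>x\<in>R - Q. card ((#) x ` B x))"
      by (rule card_UN_disjoint) (use finR finB in auto)
    also have "\<dots> = (\<Sum>x\<in>R - Q. card (B x))"
      by (rule sum.cong) (auto intro: card_image)
    finally have cU: "card (\<Union>x\<in>R - Q. (#) x ` B x) = (\<Sum>x\<in>R - Q. card (B x))" .
    have IHx: "fact m * g (card (alive f y (stepf f z x))) \<le> real (card (B x))" if "x \<in> R - Q" for x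
    proof -
      have "card (R - {x}) = m" using Suc.prems(1) that finR by auto
      moreover have "sinv (R - {x}) (stepf f z x)" using step_sinv[OF inv] that unfolding Q_def by auto
      ultimately show ?thesis using Suc.IH unfolding B_def g_def by blast
    qed
    have "fact (Suc m) * g (card (alive f y z)) = fact m * (real (card R) * g (card (alive f y z)))"
      using Suc.prems(1) by (simp add: algebra_simps)
    also have "\<dots> \<le> fact m * (\<Sum>x\<in>R - Q. g (card (alive f y (stepf f z x))))"
      using core[OF inv False beta] unfolding g_def Q_def by (intro mult_left_mono) auto
    also have "\<dots> = (\<Sum>x\<in>R - Q. fact m * g (card (alive f y (stepf f z x))))"
      by (simp add: sum_distrib_left)
    also have "\<dots> \<le> (\<Sum>x\<in>R - Q. real (card (B x)))" by (rule sum_mono) (rule IHx)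
    also have "\<dots> = real (card (\<Union>x\<in>R - Q. (#) x ` B x))" using cU by simp
    also have "\<dots> \<le> real (card {\<pi> \<in> permutations_of_set R. Ev f k y z \<pi>})"
      using card_mono[OF _ sub] by simp
    finally show ?thesis unfolding g_def .
  qed
qed

lemma prob_bound:
  assumes gt: "eval_dnf (dnf_gt (1000 * k) f) y"
  shows "(1 / real k) ^ nat \<lceil>sqrt (real k)\<rceil> \<le> measure_pmf.prob (pmf_of_set (permutations_of_set {0..<n}))
       {\<pi>. \<exists>i \<le> n. \<exists>T \<in> f. sat_term T y \<and>
              valid_stem k (generate_candidate_stem f (sweep f y \<pi> i)) T}"
proof -
  define \<beta> where "\<beta> = nat \<lceil>sqrt (real k)\<rceil>"
  define P where "P = permutations_of_set {0..<n}"
  define E where "E = {\<pi>. \<exists>i \<le> n. \<exists>T \<in> f. sat_term T y \<and>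
              valid_stem k (generate_candidate_stem f (sweep f y \<pi> i)) T}"
  have beta: "k \<le> \<beta> * \<beta>"
  proof -
    have "sqrt (real k) \<le> real \<beta>" unfolding \<beta>_def by linarith
    then have "sqrt (real k) * sqrt (real k) \<le> real \<beta> * real \<beta>"
      by (intro mult_mono) auto
    then have "real k \<le> real (\<beta> * \<beta>)" by simp
    then show ?thesis by linarith
  qed
  obtain T0 where T0: "T0 \<in> f" "sat_term T0 y" using gt unfolding eval_dnf_def dnf_gt_def by auto
  have al: "alive f y y = {T \<in> f. sat_term T y}" unfolding alive_def by auto
  have inv: "sinv {0..<n} y"
    unfolding sinv_def
  proof (intro conjI)
    show "alive f y y \<noteq> {}" using T0 al by auto
    show "Qs f y \<subseteq> {0..<n}"
    proof
      fix i assume "i \<in> Qs f y"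
      then obtain T where T: "T \<in> f" "\<not> sat_term T y" "i = rep y T" unfolding Qs_def by auto
      then show "i \<in> {0..<n}" using rep_prop[OF T(2)] term_lt[OF T(1)] by auto
    qed
    show "Dis (alive f y y) \<subseteq> {0..<n}"
      unfolding Dis_def vars_def alive_def using term_lt by force
  qed (use leny in auto)
  have a1: "1 \<le> card (alive f y y)" using T0 al fin_alive by (metis (no_types, lifting) One_nat_def Suc_leI card_gt_0_iff empty_iff mem_Collect_eq)
  have ak: "card (alive f y y) \<le> k" using q_bound[of y] by linarith
  have "fact n * (1 / real (card (alive f y y))) ^ \<beta> \<le> real (card {\<pi> \<in> P. Ev f k y y \<pi>})"
    using main[OF beta, of "{0..<n}" n y] inv unfolding P_def by simp
  moreover have "{\<pi> \<in> P. Ev f k y y \<pi>} = P \<inter> E"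
  proof -
    have "Ev f k y y \<pi> \<longleftrightarrow> \<pi> \<in> E" if "\<pi> \<in> P" for \<pi>
    proof -
      have "set \<pi> = {0..<n}" "distinct \<pi>" using that unfolding P_def by (auto dest: permutations_of_setD)
      then have len: "length \<pi> = n" using distinct_card[of \<pi>] by simp
      show ?thesis
      proof
        assume "Ev f k y y \<pi>"
        then obtain i where i: "i \<le> length \<pi>" "good f k y (sweepl f y (take i \<pi>))" unfolding Ev_def by auto
        have eq: "sweepl f y (take i \<pi>) = sweep f y \<pi> i" using sweep_eq[OF i(1)] by simp
        show "\<pi> \<in> E" using i len eq unfolding E_def good_def by auto
      next
        assume "\<pi> \<in> E"
        then obtain i T where i: "i \<le> n" "T \<in> f" "sat_term T y"
            "valid_stem k (generate_candidate_stem f (sweep f y \<pi> i)) T" unfolding E_def by auto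
        then show "Ev f k y y \<pi>" unfolding Ev_def good_def using len sweep_eq[of i \<pi> f y] by auto
      qed
    qed
    then show ?thesis by auto
  qed
  moreover have "card P = fact n" unfolding P_def by simp
  moreover have "P \<noteq> {}" "finite P" unfolding P_def by auto
  ultimately have "(1 / real (card (alive f y y))) ^ \<beta> \<le> measure_pmf.prob (pmf_of_set P) E"
    by (simp add: measure_pmf_of_set field_simps)
  moreover have "(1 / real k) ^ \<beta> \<le> (1 / real (card (alive f y y))) ^ \<beta>"
    using a1 ak by (intro power_mono) (auto simp: frac_le)
  ultimately show ?thesis unfolding \<beta>_def P_def E_def by linarith
qed

end

lemma numeric:
  fixes k :: nat
  assumes k1: "1 \<le> k"
  shows "2 powr (- 2 * sqrt (real k) * (log 2 (real k + 2)) powr 2) \<le> (1 / real k) ^ nat \<lceil>sqrt (real k)\<rceil>"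
proof -
  define \<beta> where "\<beta> = nat \<lceil>sqrt (real k)\<rceil>"
  define L where "L = log 2 (real k + 2)"
  have sk: "sqrt (real k) \<ge> 1" using k1 by simp
  have b: "real \<beta> \<le> 2 * sqrt (real k)"
  proof -
    have "real \<beta> = real_of_int \<lceil>sqrt (real k)\<rceil>" unfolding \<beta>_def by simp
    also have "\<dots> \<le> sqrt (real k) + 1" by linarith
    finally show ?thesis using sk by linarith
  qed
  have L1: "L \<ge> 1" unfolding L_def using k1 by simp
  have lk0: "log 2 (real k) \<ge> 0" using k1 by simp
  have lkL: "log 2 (real k) \<le> L" unfolding L_def using k1 by simp
  have L2: "L powr 2 = L ^ 2" using L1 by (simp add: powr_realpow)
  have "L \<le> L ^ 2" using L1 by (simp add: power2_eq_square)
  have "real \<beta> * log 2 (real k) \<le> 2 * sqrt (real k) * log 2 (real k)"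
    using b lk0 by (intro mult_right_mono) auto
  also have "\<dots> \<le> 2 * sqrt (real k) * L ^ 2"
    using lkL \<open>L \<le> L ^ 2\<close> sk by (intro mult_left_mono) auto
  finally have ex: "- 2 * sqrt (real k) * L powr 2 \<le> - (real \<beta> * log 2 (real k))" using L2 by simp
  have kpos: "real k > 0" using k1 by simp
  have "(1 / real k) ^ \<beta> = 2 powr (- (real \<beta> * log 2 (real k)))"
  proof -
    have "2 powr (- (real \<beta> * log 2 (real k))) = (2 powr (log 2 (real k))) powr (- real \<beta>)"
      by (simp add: powr_powr mult.commute)
    also have "\<dots> = real k powr (- real \<beta>)" using kpos by simp
    also have "\<dots> = 1 / (real k ^ \<beta>)" using kpos by (simp add: powr_minus powr_realpow divide_inverse)
    finally show ?thesis by (simp add: power_one_over)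
  qed
  then show ?thesis using ex unfolding \<beta>_def[symmetric] L_def[symmetric] by simp
qed

theorem lemma4p12:
  "\<exists>C > (0::real). \<forall>n k (f::dnf) y.
     dnf_over n f \<longrightarrow> card f = k \<longrightarrow> length y = n \<longrightarrow>
     eval_dnf (dnf_gt (1000 * k) f) y \<longrightarrow> \<not> eval_dnf (dnf_le (1000 * k) f) y \<longrightarrow>
     measure_pmf.prob (pmf_of_set (permutations_of_set {0..<n}))
       {\<pi>. \<exists>i \<le> n. \<exists>T \<in> f. sat_term T y \<and>
              valid_stem k (generate_candidate_stem f (sweep f y \<pi> i)) T}
     \<ge> 2 powr (- C * sqrt (real k) * (log 2 (real k + 2)) powr C)"
proof (intro exI[of _ 2] conjI allI impI)
  fix n k f y
  assume over: "dnf_over n f" and cf: "card f = k" and ly: "length y = n"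
    and gt: "eval_dnf (dnf_gt (1000 * k) f) y"
  have k1: "1 \<le> k"
  proof -
    obtain T0 where "T0 \<in> f" using gt unfolding eval_dnf_def dnf_gt_def by auto
    then have "f \<noteq> {}" by auto
    then have "card f > 0" using fin_f[OF over cf ly] by auto
    then show ?thesis using cf by simp
  qed
  show "2 powr (- 2 * sqrt (real k) * (log 2 (real k + 2)) powr 2) \<le> measure_pmf.prob (pmf_of_set (permutations_of_set {0..<n}))
       {\<pi>. \<exists>i \<le> n. \<exists>T \<in> f. sat_term T y \<and>
              valid_stem k (generate_candidate_stem f (sweep f y \<pi> i)) T}"
    using numeric[OF k1] prob_bound[OF over cf ly gt] by linarith
qed simp

end
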